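(* Let $T=(V,E)$ be a tree with a proper 2-coloring $\chi$, and let $T_\mathcal{B}$, $T_\mathcal{R}$ be its blue and red interior graphs. Then $\mathcal{S}(T)=\mathcal{S}_{even}(T_\mathcal{B})*\mathcal{S}_{even}(T_\mathcal{R})$.
   Context: $N(v)=\{u:uv\in E\}$, $N(D)=\bigcup_{v\in D}N(v)$, $N[U]=N(U)\cup U$. A TD-set of a graph is $D$ with $N(D)=V$, minimal if no proper subset is a TD-set. The stable complex $\mathcal{S}(G)$ is the simplicial complex on $V(G)$ whose facets are $V(G)\setminus D$ for $D$ a minimal TD-set. A leaf is a vertex of degree 1, a support vertex is a vertex adjacent to a leaf; the height of a vertex in a graph is its minimum distance to a leaf of that graph (isolated vertices have height 0); $V_k$ is the set of height-$k$ vertices, $V_{even}$, $V_{odd}$ the sets of vertices of even/odd height. $T_\mathcal{B}$ is the subgraph induced on $V\setminus N[V_1(T)\cap\chi^{-1}(\mathcal{B})]$, $T_\mathcal{R}$ that induced on $V\setminus N[V_1(T)\cap\chi^{-1}(\mathcal{R})]$; their components are balanced trees (no two adjacent vertices of equal height), heights computed in these forests. For such a forest $F$, an odd-TD-set is $D\subseteq V(F)$ with $N_F(D)\supseteq V_{odd}(F)$, minimal if no proper subset is one; the even-stable complex $\mathcal{S}_{even}(F)$ is the simplicial complex on $V_{even}(F)$ whose facets are $V_{even}(F)\setminus D$ for $D$ a minimal odd-TD-set. For complexes $\Delta',\Delta''$ on disjoint vertex sets, the join is $\Delta'*\Delta''=\{F'\cup F'': F'\in\Delta', F''\in\Delta''\}$.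 *)

theory Defs
  imports Main
begin

text \<open>Graphs are given by a vertex set V and an adjacency predicate adj; everything
is taken relative to V, so the subgraph induced on W is simply (W, adj).\<close>

datatype color = Blue | Red

definition nbhd :: "'a set \<Rightarrow> ('a \<Rightarrow> 'a \<Rightarrow> bool) \<Rightarrow> 'a \<Rightarrow> 'a set" where
  "nbhd V adj v = {u \<in> V. adj v u}"

definition nbhd_set :: "'a set \<Rightarrow> ('a \<Rightarrow> 'a \<Rightarrow> bool) \<Rightarrow> 'a set \<Rightarrow> 'a set" where
  "nbhd_set V adj D = (\<Union>v\<in>D. nbhd V adj v)"

definition closed_nbhd_set :: "'a set \<Rightarrow> ('a \<Rightarrow> 'a \<Rightarrow> bool) \<Rightarrow> 'a set \<Rightarrow> 'a set" where
  "closed_nbhd_set V adj U = nbhd_set V adj U \<union> U"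

definition simple_graph :: "'a set \<Rightarrow> ('a \<Rightarrow> 'a \<Rightarrow> bool) \<Rightarrow> bool" where
  "simple_graph V adj \<longleftrightarrow> finite V \<and> (\<forall>u v. adj u v \<longrightarrow> adj v u) \<and> (\<forall>v. \<not> adj v v)"

definition walk :: "'a set \<Rightarrow> ('a \<Rightarrow> 'a \<Rightarrow> bool) \<Rightarrow> 'a list \<Rightarrow> bool" where
  "walk V adj xs \<longleftrightarrow> xs \<noteq> [] \<and> set xs \<subseteq> V \<and>
     (\<forall>i. Suc i < length xs \<longrightarrow> adj (xs ! i) (xs ! Suc i))"

definition connected_graph :: "'a set \<Rightarrow> ('a \<Rightarrow> 'a \<Rightarrow> bool) \<Rightarrow> bool" where
  "connected_graph V adj \<longleftrightarrow>
     (\<forall>u\<in>V. \<forall>v\<in>V. \<exists>xs. walk V adj xs \<and> hd xs = u \<and> last xs = v)"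

definition has_cycle :: "'a set \<Rightarrow> ('a \<Rightarrow> 'a \<Rightarrow> bool) \<Rightarrow> bool" where
  "has_cycle V adj \<longleftrightarrow>
     (\<exists>xs. walk V adj xs \<and> distinct xs \<and> length xs \<ge> 3 \<and> adj (last xs) (hd xs))"

definition is_tree :: "'a set \<Rightarrow> ('a \<Rightarrow> 'a \<Rightarrow> bool) \<Rightarrow> bool" where
  "is_tree V adj \<longleftrightarrow> simple_graph V adj \<and> V \<noteq> {} \<and> connected_graph V adj \<and> \<not> has_cycle V adj"

definition proper_2_coloring :: "'a set \<Rightarrow> ('a \<Rightarrow> 'a \<Rightarrow> bool) \<Rightarrow> ('a \<Rightarrow> color) \<Rightarrow> bool" where
  "proper_2_coloring V adj \<chi> \<longleftrightarrow> (\<forall>u\<in>V. \<forall>v\<in>V. adj u v \<longrightarrow> \<chi> u \<noteq> \<chi> v)"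

definition leaf :: "'a set \<Rightarrow> ('a \<Rightarrow> 'a \<Rightarrow> bool) \<Rightarrow> 'a \<Rightarrow> bool" where
  "leaf V adj v \<longleftrightarrow> v \<in> V \<and> card (nbhd V adj v) = 1"

definition height :: "'a set \<Rightarrow> ('a \<Rightarrow> 'a \<Rightarrow> bool) \<Rightarrow> 'a \<Rightarrow> nat" where
  "height V adj v =
     (if nbhd V adj v = {} then 0
      else (LEAST k. \<exists>xs. walk V adj xs \<and> hd xs = v \<and> leaf V adj (last xs) \<and> length xs = Suc k))"

definition height_class :: "'a set \<Rightarrow> ('a \<Rightarrow> 'a \<Rightarrow> bool) \<Rightarrow> nat \<Rightarrow> 'a set" where
  "height_class V adj k = {v \<in> V. height V adj v = k}"

definition V_even :: "'a set \<Rightarrow> ('a \<Rightarrow> 'a \<Rightarrow> bool) \<Rightarrow> 'a set" where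
  "V_even V adj = {v \<in> V. even (height V adj v)}"

definition V_odd :: "'a set \<Rightarrow> ('a \<Rightarrow> 'a \<Rightarrow> bool) \<Rightarrow> 'a set" where
  "V_odd V adj = {v \<in> V. odd (height V adj v)}"

definition TD_set :: "'a set \<Rightarrow> ('a \<Rightarrow> 'a \<Rightarrow> bool) \<Rightarrow> 'a set \<Rightarrow> bool" where
  "TD_set V adj D \<longleftrightarrow> D \<subseteq> V \<and> nbhd_set V adj D = V"

definition minimal_TD_set :: "'a set \<Rightarrow> ('a \<Rightarrow> 'a \<Rightarrow> bool) \<Rightarrow> 'a set \<Rightarrow> bool" where
  "minimal_TD_set V adj D \<longleftrightarrow> TD_set V adj D \<and> (\<forall>D'. D' \<subset> D \<longrightarrow> \<not> TD_set V adj D')"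

definition stable_complex :: "'a set \<Rightarrow> ('a \<Rightarrow> 'a \<Rightarrow> bool) \<Rightarrow> 'a set set" where
  "stable_complex V adj = {F. \<exists>D. minimal_TD_set V adj D \<and> F \<subseteq> V - D}"

definition odd_TD_set :: "'a set \<Rightarrow> ('a \<Rightarrow> 'a \<Rightarrow> bool) \<Rightarrow> 'a set \<Rightarrow> bool" where
  "odd_TD_set V adj D \<longleftrightarrow> D \<subseteq> V \<and> V_odd V adj \<subseteq> nbhd_set V adj D"

definition minimal_odd_TD_set :: "'a set \<Rightarrow> ('a \<Rightarrow> 'a \<Rightarrow> bool) \<Rightarrow> 'a set \<Rightarrow> bool" where
  "minimal_odd_TD_set V adj D \<longleftrightarrow> odd_TD_set V adj D \<and> (\<forall>D'. D' \<subset> D \<longrightarrow> \<not> odd_TD_set V adj D')"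

definition even_stable_complex :: "'a set \<Rightarrow> ('a \<Rightarrow> 'a \<Rightarrow> bool) \<Rightarrow> 'a set set" where
  "even_stable_complex V adj =
     {F. \<exists>D. minimal_odd_TD_set V adj D \<and> F \<subseteq> V_even V adj - D}"

definition join_complex :: "'a set set \<Rightarrow> 'a set set \<Rightarrow> 'a set set" where
  "join_complex \<Delta>1 \<Delta>2 = {F1 \<union> F2 | F1 F2. F1 \<in> \<Delta>1 \<and> F2 \<in> \<Delta>2}"

definition interior_vertices :: "'a set \<Rightarrow> ('a \<Rightarrow> 'a \<Rightarrow> bool) \<Rightarrow> ('a \<Rightarrow> color) \<Rightarrow> color \<Rightarrow> 'a set" where
  "interior_vertices V adj \<chi> c =
     V - closed_nbhd_set V adj (height_class V adj 1 \<inter> {v. \<chi> v = c})"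

end

theory Submission
  imports Defs
begin

lemma walk_mono: "walk W adj xs \<Longrightarrow> W \<subseteq> V \<Longrightarrow> walk V adj xs"
  unfolding walk_def by auto

lemma has_cycle_mono: "has_cycle W adj \<Longrightarrow> W \<subseteq> V \<Longrightarrow> has_cycle V adj"
  unfolding has_cycle_def using walk_mono by blast

lemma color_two: "(a::color) \<noteq> b \<Longrightarrow> (a = c) = (b \<noteq> c)"
  by (cases a; cases b; cases c) auto

lemma walk_color:
  assumes "walk W adj xs" "W \<subseteq> V" "proper_2_coloring V adj \<chi>"
  shows "i < length xs \<Longrightarrow> (\<chi> (xs!i) = \<chi> (xs!0)) = even i"
proof (induction i)
  case 0
  then show ?case by simp
next
  case (Suc i)
  have a: "adj (xs!i) (xs!Suc i)" using assms(1) Suc.prems unfolding walk_def by auto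
  have "xs!i \<in> V" "xs!Suc i \<in> V" using assms(1,2) Suc.prems unfolding walk_def
    by (meson Suc_lessD nth_mem subsetD)+
  then have "\<chi> (xs!Suc i) \<noteq> \<chi> (xs!i)" using a assms(3) unfolding proper_2_coloring_def by metis
  then have "(\<chi> (xs!Suc i) = \<chi> (xs!0)) = (\<chi> (xs!i) \<noteq> \<chi> (xs!0))" by (rule color_two)
  then show ?case using Suc by simp
qed

lemma walk_to_leaf:
  assumes fin: "finite W" and sym: "\<forall>u v. adj u v \<longrightarrow> adj v u" and irr: "\<forall>v. \<not> adj v v"
    and nc: "\<not> has_cycle W adj" and v: "v \<in> W" and ne: "nbhd W adj v \<noteq> {}"
  shows "\<exists>xs. walk W adj xs \<and> hd xs = v \<and> leaf W adj (last xs)"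
proof -
  define P where "P xs \<longleftrightarrow> walk W adj xs \<and> distinct xs \<and> hd xs = v \<and> length xs \<ge> 2" for xs
  obtain u where u: "u \<in> W" "adj v u" using ne unfolding nbhd_def by auto
  have "P [v,u]" unfolding P_def walk_def using u v irr
    by (auto simp: less_Suc_eq)
  have bound: "length xs \<le> card W" if "P xs" for xs
    using that unfolding P_def walk_def by (metis card_mono distinct_card fin)
  define Q where "Q k \<longleftrightarrow> (\<exists>xs. P xs \<and> length xs = k)" for k
  have "Q 2" unfolding Q_def using \<open>P [v,u]\<close> by force
  moreover have "\<forall>y. Q y \<longrightarrow> y < Suc (card W)" unfolding Q_def using bound by (auto simp: less_Suc_eq_le)
  ultimately have "\<exists>m. Q m \<and> (\<forall>y. Q y \<longrightarrow> y \<le> m)" by (rule ex_has_greatest_nat)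
  then obtain m where "Q m" and mm: "\<forall>y. Q y \<longrightarrow> y \<le> m" by blast
  then obtain xs where Pxs: "P xs" and "length xs = m" unfolding Q_def by blast
  then have mx: "\<forall>ys. P ys \<longrightarrow> length ys \<le> length xs" using mm unfolding Q_def by blast
  define n where "n = length xs"
  have n2: "n \<ge> 2" using Pxs unfolding P_def n_def by auto
  have wk: "walk W adj xs" and dst: "distinct xs" and hdx: "hd xs = v" using Pxs unfolding P_def by auto
  have lastx: "last xs = xs!(n-1)" using n2 unfolding n_def by (intro last_conv_nth) auto
  have setW: "set xs \<subseteq> W" using wk unfolding walk_def by auto
  have adjp: "adj (xs!(n-2)) (xs!(n-1))"
  proof -
    have "Suc (n-2) < length xs" "Suc (n-2) = n-1" using n2 unfolding n_def by auto
    then show ?thesis using wk unfolding walk_def by metis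
  qed
  have pW: "xs!(n-2) \<in> W" using setW n2 unfolding n_def by auto
  have uW: "xs!(n-1) \<in> W" using setW n2 unfolding n_def by auto
  have nb: "nbhd W adj (last xs) = {xs!(n-2)}"
  proof
    show "{xs!(n-2)} \<subseteq> nbhd W adj (last xs)" using pW adjp sym lastx unfolding nbhd_def by auto
  next
    show "nbhd W adj (last xs) \<subseteq> {xs!(n-2)}"
    proof
      fix w assume "w \<in> nbhd W adj (last xs)"
      then have wW: "w \<in> W" and aw: "adj (xs!(n-1)) w" unfolding nbhd_def lastx by auto
      show "w \<in> {xs!(n-2)}"
      proof (rule ccontr)
        assume wp: "w \<notin> {xs!(n-2)}"
        show False
        proof (cases "w \<in> set xs")
          case False
          have "walk W adj (xs @ [w])" unfolding walk_def
          proof (intro conjI allI impI)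
            fix i assume i: "Suc i < length (xs @ [w])"
            show "adj ((xs @ [w]) ! i) ((xs @ [w]) ! Suc i)"
            proof (cases "Suc i < n")
              case True
              then show ?thesis using wk unfolding walk_def n_def by (simp add: nth_append)
            next
              case False
              then have "i = n - 1" "Suc i = n" using i n2 unfolding n_def by auto
              then show ?thesis using aw n2 unfolding n_def by (simp add: nth_append)
            qed
          qed (use setW wW in simp_all)
          moreover have "distinct (xs @ [w])" using dst False by simp
          moreover have "hd (xs @ [w]) = v" using hdx n2 n_def by (cases xs) auto
          moreover have "length (xs @ [w]) \<ge> 2" using n2 n_def by simp
          ultimately have "P (xs @ [w])" unfolding P_def by blast
          then show False using mx by fastforce
        next
          case True
          then obtain j where j: "j < n" "xs!j = w" unfolding n_def by (auto simp: in_set_conv_nth)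
          have "j \<noteq> n - 1" using aw irr j by auto
          moreover have "j \<noteq> n - 2" using wp j by auto
          ultimately have j3: "j + 3 \<le> n" using j n2 by linarith
          define ys where "ys = drop j xs"
          have y1: "ys \<noteq> []" using j unfolding ys_def n_def by simp
          have y2: "set ys \<subseteq> W" using setW set_drop_subset unfolding ys_def by fast
          have y3: "adj (ys ! i) (ys ! Suc i)" if "Suc i < length ys" for i
          proof -
            have "Suc (j + i) < length xs" using that unfolding ys_def by simp
            then have "adj (xs ! (j+i)) (xs ! Suc (j+i))" using wk unfolding walk_def by blast
            then show ?thesis using that unfolding ys_def by simp
          qed
          have "walk W adj ys" unfolding walk_def using y1 y2 y3 by blast
          moreover have "distinct ys" using dst unfolding ys_def by simp
          moreover have "length ys \<ge> 3" using j3 unfolding ys_def n_def by simp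
          moreover have "last ys = xs!(n-1)" using j3 lastx unfolding ys_def n_def by simp
          moreover have "hd ys = w" using j j3 unfolding ys_def n_def by (simp add: hd_drop_conv_nth)
          ultimately have "has_cycle W adj" unfolding has_cycle_def using aw by metis
          then show False using nc by simp
        qed
      qed
    qed
  qed
  have "leaf W adj (last xs)" unfolding leaf_def nb using uW lastx by simp
  then show ?thesis using wk hdx by blast
qed


lemma height_wit:
  assumes "nbhd W adj v \<noteq> {}" "\<exists>xs. walk W adj xs \<and> hd xs = v \<and> leaf W adj (last xs)"
  shows "\<exists>xs. walk W adj xs \<and> hd xs = v \<and> leaf W adj (last xs) \<and> length xs = Suc (height W adj v)"
proof -
  obtain xs where xs: "walk W adj xs" "hd xs = v" "leaf W adj (last xs)" using assms(2) by blast
  then have "length xs = Suc (length xs - 1)" unfolding walk_def by (cases xs) auto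
  then have ex: "\<exists>k xs. walk W adj xs \<and> hd xs = v \<and> leaf W adj (last xs) \<and> length xs = Suc k"
    using xs by blast
  have "height W adj v = (LEAST k. \<exists>xs. walk W adj xs \<and> hd xs = v \<and> leaf W adj (last xs) \<and> length xs = Suc k)"
    unfolding height_def using assms(1) by simp
  then show ?thesis using LeastI_ex[OF ex] by simp
qed

locale tctx =
  fixes V :: "'a set" and adj :: "'a \<Rightarrow> 'a \<Rightarrow> bool" and \<chi> :: "'a \<Rightarrow> color"
  assumes tree: "is_tree V adj" and card3: "card V \<ge> 3" and col: "proper_2_coloring V adj \<chi>"
begin

lemma fin: "finite V" and sym: "\<forall>u v. adj u v \<longrightarrow> adj v u" and irr: "\<forall>v. \<not> adj v v"
  and conn: "connected_graph V adj" and nc: "\<not> has_cycle V adj"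
  using tree unfolding is_tree_def simple_graph_def by auto

abbreviation "H1 \<equiv> height_class V adj 1"
abbreviation "W c \<equiv> interior_vertices V adj \<chi> c"

lemma H1_sub: "H1 \<subseteq> V" unfolding height_class_def by auto

lemma col_other: "u \<in> V \<Longrightarrow> v \<in> V \<Longrightarrow> adj u v \<Longrightarrow> \<chi> u \<noteq> c \<Longrightarrow> \<chi> v = c"
  using col color_two unfolding proper_2_coloring_def by metis

lemma W_sub: "W c \<subseteq> V" unfolding interior_vertices_def by auto

lemma memW_c: assumes "x \<in> V" "\<chi> x = c" shows "x \<in> W c \<longleftrightarrow> x \<notin> H1"
proof -
  have "x \<notin> nbhd_set V adj (H1 \<inter> {v. \<chi> v = c})"
  proof
    assume "x \<in> nbhd_set V adj (H1 \<inter> {v. \<chi> v = c})"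
    then obtain s where s: "s \<in> H1" "\<chi> s = c" "adj s x" unfolding nbhd_set_def nbhd_def by auto
    then have "s \<in> V" using H1_sub by auto
    then show False using col s assms unfolding proper_2_coloring_def by metis
  qed
  then show ?thesis using assms unfolding interior_vertices_def closed_nbhd_set_def by auto
qed

lemma memW_o: "y \<in> V \<Longrightarrow> \<chi> y \<noteq> c \<Longrightarrow> y \<in> W c \<longleftrightarrow> \<not>(\<exists>s\<in>H1. \<chi> s = c \<and> adj s y)"
  unfolding interior_vertices_def closed_nbhd_set_def nbhd_set_def nbhd_def
  by auto

lemma nbW_o: assumes "y \<in> W c" "\<chi> y \<noteq> c" shows "nbhd (W c) adj y = nbhd V adj y"
proof
  show "nbhd (W c) adj y \<subseteq> nbhd V adj y" using W_sub unfolding nbhd_def by auto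
next
  show "nbhd V adj y \<subseteq> nbhd (W c) adj y"
  proof
    fix x assume x: "x \<in> nbhd V adj y"
    have yV: "y \<in> V" using assms W_sub by auto
    have xV: "x \<in> V" "adj y x" using x unfolding nbhd_def by auto
    have cx: "\<chi> x = c" using col_other[OF yV xV assms(2)] .
    have "\<not>(\<exists>s\<in>H1. \<chi> s = c \<and> adj s y)" using assms(1) memW_o[OF yV assms(2)] by simp
    moreover have "adj x y" using xV sym by simp
    ultimately have "x \<notin> H1" using cx by blast
    then show "x \<in> nbhd (W c) adj y" using memW_c[OF xV(1) cx] xV unfolding nbhd_def by auto
  qed
qed

lemma nonisol: assumes "v \<in> V" shows "nbhd V adj v \<noteq> {}"
proof -
  obtain w where w: "w \<in> V" "w \<noteq> v"
  proof -
    have "\<not> V \<subseteq> {v}"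
    proof
      assume "V \<subseteq> {v}"
      then have "card V \<le> card {v}" by (intro card_mono) auto
      then show False using card3 by simp
    qed
    then show ?thesis using that by blast
  qed
  obtain xs where xs: "walk V adj xs" "hd xs = v" "last xs = w" using conn assms w unfolding connected_graph_def by blast
  have "length xs \<ge> 2"
  proof (rule ccontr)
    assume "\<not> length xs \<ge> 2"
    moreover have "length xs > 0" using xs unfolding walk_def by simp
    ultimately have "length xs = 1" by linarith
    then show False using xs w by (cases xs) auto
  qed
  then have "adj (xs!0) (xs!Suc 0)" "xs!Suc 0 \<in> V" using xs unfolding walk_def by (auto intro!: nth_mem)
  moreover have "xs!0 = v" using xs unfolding walk_def by (simp add: hd_conv_nth)
  ultimately show ?thesis unfolding nbhd_def by auto
qed

end

context tctx
begin

lemma two_leaves_cover: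
  assumes nu: "nbhd V adj u = {v}" and nv: "nbhd V adj v = {u}"
  shows False
proof -
  obtain w where w: "w \<in> V" "w \<noteq> u" "w \<noteq> v"
  proof -
    have "\<not> V \<subseteq> {u, v}"
    proof
      assume "V \<subseteq> {u,v}"
      then have "card V \<le> card {u,v}" by (intro card_mono) auto
      also have "\<dots> \<le> 2" by (simp add: card_insert_le_m1)
      finally show False using card3 by simp
    qed
    then show ?thesis using that by blast
  qed
  have uV: "u \<in> V" using nv unfolding nbhd_def by auto
  obtain xs where xs: "walk V adj xs" "hd xs = w" "last xs = u"
    using conn uV w unfolding connected_graph_def by blast
  have ne: "xs \<noteq> []" using xs unfolding walk_def by simp
  have key: "k < length xs \<Longrightarrow> xs ! (length xs - 1 - k) \<in> {u, v}" for k
  proof (induction k)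
    case 0
    then show ?case using xs ne by (simp add: last_conv_nth)
  next
    case (Suc k)
    define j where "j = length xs - 1 - Suc k"
    have j1: "Suc j = length xs - 1 - k" "Suc j < length xs" using Suc.prems unfolding j_def by auto
    have a: "adj (xs!j) (xs!Suc j)" using xs j1 unfolding walk_def by blast
    have jV: "xs!j \<in> V" using xs j1 unfolding walk_def by auto
    have "xs!Suc j \<in> {u,v}" using Suc j1 by simp
    then have "xs!j \<in> nbhd V adj (xs!Suc j)" "xs!Suc j \<in> {u,v}" using a jV sym unfolding nbhd_def by auto
    then have "xs!j \<in> {u,v}" using nu nv by auto
    then show ?case unfolding j_def .
  qed
  have "xs ! 0 \<in> {u,v}" using key[of "length xs - 1"] ne by simp
  moreover have "xs ! 0 = w" using xs ne by (simp add: hd_conv_nth)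
  ultimately show False using w by auto
qed

lemma supp_h1:
  assumes lv: "leaf V adj v" and uV: "u \<in> V" and a: "adj v u"
  shows "u \<in> H1"
proof -
  have nv: "nbhd V adj v = {u}"
  proof -
    have "u \<in> nbhd V adj v" using uV a unfolding nbhd_def by auto
    moreover obtain z where "nbhd V adj v = {z}" using lv unfolding leaf_def by (auto simp: card_1_singleton_iff)
    ultimately show ?thesis by auto
  qed
  have vV: "v \<in> V" using lv unfolding leaf_def by auto
  have vu: "v \<in> nbhd V adj u" using vV a sym unfolding nbhd_def by auto
  have nl: "\<not> leaf V adj u"
  proof
    assume "leaf V adj u"
    then obtain z where "nbhd V adj u = {z}" unfolding leaf_def by (auto simp: card_1_singleton_iff)
    then have "nbhd V adj u = {v}" using vu by auto
    then show False using two_leaves_cover nv by blast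
  qed
  define P where "P k \<longleftrightarrow> (\<exists>xs. walk V adj xs \<and> hd xs = u \<and> leaf V adj (last xs) \<and> length xs = Suc k)" for k
  have P1: "P 1" unfolding P_def
    by (rule exI[of _ "[u,v]"]) (use uV vV a sym lv in \<open>auto simp: walk_def less_Suc_eq\<close>)
  have P0: "\<not> P 0" unfolding P_def
  proof
    assume "\<exists>xs. walk V adj xs \<and> hd xs = u \<and> leaf V adj (last xs) \<and> length xs = Suc 0"
    then obtain xs where "hd xs = u" "leaf V adj (last xs)" "length xs = Suc 0" by blast
    then show False using nl by (cases xs) auto
  qed
  have "height V adj u = (LEAST k. P k)" unfolding height_def P_def using vu by auto
  also have "\<dots> = 1"
  proof (rule Least_equality)
    show "P 1" by (rule P1)
    fix y assume "P y" then show "1 \<le> y" using P0 by (cases y) auto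
  qed
  finally show ?thesis using uV unfolding height_class_def by auto
qed

lemma fW: "finite (W c)" using fin W_sub finite_subset by blast
lemma ncW: "\<not> has_cycle (W c) adj" using nc W_sub has_cycle_mono by blast

lemma notleafW_o:
  assumes y: "y \<in> W c" "\<chi> y \<noteq> c"
  shows "\<not> leaf (W c) adj y" "nbhd (W c) adj y \<noteq> {}"
proof -
  have yV: "y \<in> V" using y W_sub by auto
  show "nbhd (W c) adj y \<noteq> {}" using nbW_o[OF y] nonisol[OF yV] by simp
  show "\<not> leaf (W c) adj y"
  proof
    assume "leaf (W c) adj y"
    then have lv: "leaf V adj y" using nbW_o[OF y] yV unfolding leaf_def by simp
    then obtain u where "nbhd V adj y = {u}" unfolding leaf_def by (auto simp: card_1_singleton_iff)
    then have u: "u \<in> V" "adj y u" unfolding nbhd_def by auto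
    have "u \<in> H1" using supp_h1[OF lv u] .
    moreover have "\<chi> u = c" using col_other[OF yV u y(2)] .
    moreover have "adj u y" using u sym by auto
    ultimately show False using memW_o[OF yV y(2)] y(1) by blast
  qed
qed

lemma height_parity:
  assumes v: "v \<in> W c"
  shows "even (height (W c) adj v) \<longleftrightarrow> \<chi> v = c"
proof (cases "nbhd (W c) adj v = {}")
  case True
  then have "\<chi> v = c" using notleafW_o(2)[OF v] by blast
  moreover have "height (W c) adj v = 0" using True unfolding height_def by simp
  ultimately show ?thesis by simp
next
  case False
  have "\<exists>xs. walk (W c) adj xs \<and> hd xs = v \<and> leaf (W c) adj (last xs)"
    using walk_to_leaf[OF fW sym irr ncW v False] .
  from height_wit[OF False this] obtain xs where xs: "walk (W c) adj xs" "hd xs = v"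
    "leaf (W c) adj (last xs)" "length xs = Suc (height (W c) adj v)" by blast
  have ne: "xs \<noteq> []" using xs unfolding walk_def by simp
  have lW: "last xs \<in> W c" using xs(3) unfolding leaf_def by auto
  have cl: "\<chi> (last xs) = c" using notleafW_o(1)[OF lW] xs(3) by blast
  have "(\<chi> (xs ! (height (W c) adj v)) = \<chi> (xs!0)) = even (height (W c) adj v)"
    using walk_color[OF xs(1) W_sub col] xs(4) by simp
  moreover have "xs ! (height (W c) adj v) = last xs" using xs(4) ne by (simp add: last_conv_nth)
  moreover have "xs ! 0 = v" using xs(2) ne by (simp add: hd_conv_nth)
  ultimately show ?thesis using cl by auto
qed

lemma Veven: "V_even (W c) adj = {v \<in> W c. \<chi> v = c}"
  unfolding V_even_def using height_parity by blast
lemma Vodd: "V_odd (W c) adj = {v \<in> W c. \<chi> v \<noteq> c}"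
  unfolding V_odd_def using height_parity by blast

lemma h1_leaf:
  assumes s: "s \<in> H1"
  shows "\<exists>l\<in>V. adj s l \<and> nbhd V adj l = {s}"
proof -
  have sV: "s \<in> V" and hs: "height V adj s = 1" using s unfolding height_class_def by auto
  have ne: "nbhd V adj s \<noteq> {}" using hs unfolding height_def by (auto split: if_splits)
  from height_wit[OF ne walk_to_leaf[OF fin sym irr nc sV ne]] obtain xs where
    xs: "walk V adj xs" "hd xs = s" "leaf V adj (last xs)" "length xs = 2" using hs by auto
  then obtain l where xl: "xs = [s, l]"
    by (cases xs; cases "tl xs") auto
  have a: "adj s l" using xs(1) xl unfolding walk_def by auto
  have lV: "l \<in> V" and ll: "leaf V adj l" using xs xl unfolding leaf_def by auto
  obtain z where "nbhd V adj l = {z}" using ll unfolding leaf_def by (auto simp: card_1_singleton_iff)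
  moreover have "s \<in> nbhd V adj l" using sV a sym unfolding nbhd_def by auto
  ultimately show ?thesis using lV a by auto
qed

lemma TD_H1: assumes "TD_set V adj D" shows "H1 \<subseteq> D"
proof
  fix s assume "s \<in> H1"
  then obtain l where l: "l \<in> V" "nbhd V adj l = {s}" using h1_leaf by blast
  then have "l \<in> nbhd_set V adj D" using assms unfolding TD_set_def by auto
  then obtain x where "x \<in> D" "l \<in> nbhd V adj x" unfolding nbhd_set_def by auto
  then have "x \<in> nbhd V adj l" using assms sym unfolding TD_set_def nbhd_def by auto
  then show "s \<in> D" using l \<open>x \<in> D\<close> by auto
qed

end

lemma exists_min_TD:
  assumes "finite D" "TD_set V adj D"
  shows "\<exists>D0\<subseteq>D. minimal_TD_set V adj D0"
  using assms
proof (induction D rule: finite_psubset_induct)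
  case (psubset D)
  show ?case
  proof (cases "minimal_TD_set V adj D")
    case True
    then show ?thesis by blast
  next
    case False
    then obtain D' where "D' \<subset> D" "TD_set V adj D'" using psubset.prems unfolding minimal_TD_set_def by blast
    then obtain D0 where "D0 \<subseteq> D'" "minimal_TD_set V adj D0" using psubset.IH[of D'] by blast
    then show ?thesis using \<open>D' \<subset> D\<close> by blast
  qed
qed

context tctx
begin

lemma minodd_even:
  assumes m: "minimal_odd_TD_set (W c) adj D"
  shows "D \<subseteq> {v \<in> W c. \<chi> v = c}"
proof
  fix x assume xD: "x \<in> D"
  have DW: "D \<subseteq> W c" using m unfolding minimal_odd_TD_set_def odd_TD_set_def by auto
  show "x \<in> {v \<in> W c. \<chi> v = c}"
  proof (rule ccontr)
    assume "x \<notin> {v \<in> W c. \<chi> v = c}"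
    then have cx: "\<chi> x \<noteq> c" using xD DW by auto
    have "odd_TD_set (W c) adj (D - {x})" unfolding odd_TD_set_def
    proof
      show "D - {x} \<subseteq> W c" using DW by auto
      show "V_odd (W c) adj \<subseteq> nbhd_set (W c) adj (D - {x})"
      proof
        fix y assume y: "y \<in> V_odd (W c) adj"
        then have yW: "y \<in> W c" and cy: "\<chi> y \<noteq> c" using Vodd by auto
        have "y \<in> nbhd_set (W c) adj D" using y m unfolding minimal_odd_TD_set_def odd_TD_set_def by auto
        then obtain z where z: "z \<in> D" "y \<in> nbhd (W c) adj z" unfolding nbhd_set_def by auto
        have "z \<noteq> x"
        proof
          assume "z = x"
          then have xy: "adj x y" "x \<in> V" "y \<in> V" using z DW W_sub xD unfolding nbhd_def by auto
          then have "\<chi> y = c" using col_other[OF xy(2) xy(3) xy(1) cx] by simp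
          then show False using cy by simp
        qed
        then show "y \<in> nbhd_set (W c) adj (D - {x})" using z unfolding nbhd_set_def by auto
      qed
    qed
    moreover have "D - {x} \<subset> D" using xD by auto
    ultimately show False using m unfolding minimal_odd_TD_set_def by blast
  qed
qed

lemma sub_dir:
  assumes D: "minimal_TD_set V adj D"
  shows "minimal_odd_TD_set (W c) adj ({x \<in> D. \<chi> x = c} - H1)"
proof -
  define Dc where "Dc = {x \<in> D. \<chi> x = c} - H1"
  have TD: "TD_set V adj D" using D unfolding minimal_TD_set_def by auto
  have DV: "D \<subseteq> V" using TD unfolding TD_set_def by auto
  have H1D: "H1 \<subseteq> D" using TD_H1[OF TD] .
  have DcW: "Dc \<subseteq> W c"
  proof
    fix x assume "x \<in> Dc"
    then have "x \<in> V" "\<chi> x = c" "x \<notin> H1" unfolding Dc_def using DV by auto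
    then show "x \<in> W c" using memW_c by blast
  qed
  have odd: "odd_TD_set (W c) adj Dc" unfolding odd_TD_set_def
  proof
    show "Dc \<subseteq> W c" by (rule DcW)
    show "V_odd (W c) adj \<subseteq> nbhd_set (W c) adj Dc"
    proof
      fix y assume y: "y \<in> V_odd (W c) adj"
      then have yW: "y \<in> W c" and cy: "\<chi> y \<noteq> c" using Vodd by auto
      have yV: "y \<in> V" using yW W_sub by auto
      then have "y \<in> nbhd_set V adj D" using TD unfolding TD_set_def by auto
      then obtain x where x: "x \<in> D" "y \<in> nbhd V adj x" unfolding nbhd_set_def by auto
      have xV: "x \<in> V" "adj x y" "adj y x" using x DV sym unfolding nbhd_def by auto
      have cx: "\<chi> x = c" using col_other[OF yV xV(1) xV(3) cy] .
      have "\<not>(\<exists>s\<in>H1. \<chi> s = c \<and> adj s y)" using memW_o[OF yV cy] yW by simp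
      then have "x \<notin> H1" using cx xV(2) by blast
      then have "x \<in> Dc" unfolding Dc_def using x cx by auto
      then have "y \<in> nbhd (W c) adj x" using yW xV unfolding nbhd_def by auto
      then show "y \<in> nbhd_set (W c) adj Dc" using \<open>x \<in> Dc\<close> unfolding nbhd_set_def by auto
    qed
  qed
  have "\<not> odd_TD_set (W c) adj D''" if D'': "D'' \<subset> Dc" for D''
  proof
    assume o2: "odd_TD_set (W c) adj D''"
    define Ds where "Ds = D - (Dc - D'')"
    have "Ds \<subset> D" using D'' unfolding Ds_def Dc_def by auto
    moreover have "TD_set V adj Ds" unfolding TD_set_def
    proof
      show "Ds \<subseteq> V" using DV unfolding Ds_def by auto
      show "nbhd_set V adj Ds = V"
      proof
        show "nbhd_set V adj Ds \<subseteq> V" unfolding nbhd_set_def nbhd_def by auto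
        show "V \<subseteq> nbhd_set V adj Ds"
        proof
          fix y assume yV: "y \<in> V"
          then have "y \<in> nbhd_set V adj D" using TD unfolding TD_set_def by auto
          then obtain x where x: "x \<in> D" "y \<in> nbhd V adj x" unfolding nbhd_set_def by auto
          show "y \<in> nbhd_set V adj Ds"
          proof (cases "x \<in> Dc - D''")
            case False
            then show ?thesis using x unfolding Ds_def nbhd_set_def by auto
          next
            case True
            then have cx: "\<chi> x = c" and xV: "x \<in> V" "adj x y" using x DV unfolding Dc_def nbhd_def by auto
            have "\<chi> x \<noteq> \<chi> y" using col xV yV unfolding proper_2_coloring_def by blast
            then have cy: "\<chi> y \<noteq> c" using cx by simp
            show ?thesis
            proof (cases "\<exists>s\<in>H1. \<chi> s = c \<and> adj s y")
              case True
              then obtain s where s: "s \<in> H1" "\<chi> s = c" "adj s y" by blast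
              have "s \<in> Ds" using s H1D unfolding Ds_def Dc_def by auto
              moreover have "y \<in> nbhd V adj s" using yV s unfolding nbhd_def by auto
              ultimately show ?thesis unfolding nbhd_set_def by auto
            next
              case False
              then have yW: "y \<in> W c" using memW_o[OF yV cy] by simp
              then have "y \<in> V_odd (W c) adj" using Vodd cy by auto
              then have "y \<in> nbhd_set (W c) adj D''" using o2 unfolding odd_TD_set_def by auto
              then obtain z where z: "z \<in> D''" "y \<in> nbhd (W c) adj z" unfolding nbhd_set_def by auto
              have "z \<in> Ds" using z D'' unfolding Ds_def Dc_def by auto
              moreover have "y \<in> nbhd V adj z" using z W_sub unfolding nbhd_def by auto
              ultimately show ?thesis unfolding nbhd_set_def by auto
            qed
          qed
        qed
      qed
    qed
    ultimately show False using D unfolding minimal_TD_set_def by blast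
  qed
  then show ?thesis using odd unfolding minimal_odd_TD_set_def Dc_def by blast
qed

lemma main_eq:
  "stable_complex V adj = join_complex (even_stable_complex (W Blue) adj) (even_stable_complex (W Red) adj)"
proof
  show "stable_complex V adj \<subseteq> join_complex (even_stable_complex (W Blue) adj) (even_stable_complex (W Red) adj)"
  proof
    fix F assume "F \<in> stable_complex V adj"
    then obtain D where D: "minimal_TD_set V adj D" and FD: "F \<subseteq> V - D" unfolding stable_complex_def by auto
    have TD: "TD_set V adj D" using D unfolding minimal_TD_set_def by auto
    have H1D: "H1 \<subseteq> D" using TD_H1[OF TD] .
    have part: "{v \<in> F. \<chi> v = c} \<in> even_stable_complex (W c) adj" for c
    proof -
      have "{v \<in> F. \<chi> v = c} \<subseteq> V_even (W c) adj - ({x \<in> D. \<chi> x = c} - H1)"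
      proof
        fix v assume v: "v \<in> {v \<in> F. \<chi> v = c}"
        then have "v \<in> V" "v \<notin> D" "\<chi> v = c" using FD by auto
        then have "v \<notin> H1" using H1D by auto
        then have "v \<in> W c" using memW_c[OF \<open>v \<in> V\<close> \<open>\<chi> v = c\<close>] by simp
        then show "v \<in> V_even (W c) adj - ({x \<in> D. \<chi> x = c} - H1)" using Veven \<open>\<chi> v = c\<close> \<open>v \<notin> D\<close> by auto
      qed
      then show ?thesis using sub_dir[OF D, of c] unfolding even_stable_complex_def mem_Collect_eq by (intro exI conjI)
    qed
    have cb: "\<chi> v = Blue \<or> \<chi> v = Red" for v by (cases "\<chi> v") auto
    have "F = {v \<in> F. \<chi> v = Blue} \<union> {v \<in> F. \<chi> v = Red}" using cb by auto
    then show "F \<in> join_complex (even_stable_complex (W Blue) adj) (even_stable_complex (W Red) adj)"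
      unfolding join_complex_def mem_Collect_eq using part[of Blue] part[of Red] by (intro exI conjI)
  qed
next
  show "join_complex (even_stable_complex (W Blue) adj) (even_stable_complex (W Red) adj) \<subseteq> stable_complex V adj"
  proof
    fix F assume "F \<in> join_complex (even_stable_complex (W Blue) adj) (even_stable_complex (W Red) adj)"
    then obtain F1 F2 where F: "F = F1 \<union> F2" and F1: "F1 \<in> even_stable_complex (W Blue) adj"
      and F2: "F2 \<in> even_stable_complex (W Red) adj" unfolding join_complex_def by blast
    obtain D1 where D1: "minimal_odd_TD_set (W Blue) adj D1" "F1 \<subseteq> V_even (W Blue) adj - D1"
      using F1 unfolding even_stable_complex_def by blast
    obtain D2 where D2: "minimal_odd_TD_set (W Red) adj D2" "F2 \<subseteq> V_even (W Red) adj - D2"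
      using F2 unfolding even_stable_complex_def by blast
    define Dd where "Dd c = (if c = Blue then D1 else D2)" for c
    have Ddm: "minimal_odd_TD_set (W c) adj (Dd c)" for c using D1 D2 unfolding Dd_def by (cases c) auto
    have Dde: "Dd c \<subseteq> {v \<in> W c. \<chi> v = c}" for c using minodd_even[OF Ddm] .
    define D where "D = H1 \<union> D1 \<union> D2"
    have DdD: "Dd c \<subseteq> D" for c unfolding D_def Dd_def by auto
    have TD: "TD_set V adj D" unfolding TD_set_def
    proof
      show "D \<subseteq> V" unfolding D_def using H1_sub Dde[of Blue] Dde[of Red] W_sub[of Blue] W_sub[of Red] unfolding Dd_def by auto
      show "nbhd_set V adj D = V"
      proof
        show "nbhd_set V adj D \<subseteq> V" unfolding nbhd_set_def nbhd_def by auto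
        show "V \<subseteq> nbhd_set V adj D"
        proof
          fix y assume yV: "y \<in> V"
          define c where "c = (if \<chi> y = Blue then Red else Blue)"
          have cy: "\<chi> y \<noteq> c" unfolding c_def by (cases "\<chi> y") auto
          show "y \<in> nbhd_set V adj D"
          proof (cases "\<exists>s\<in>H1. \<chi> s = c \<and> adj s y")
            case True
            then obtain s where s: "s \<in> H1" "adj s y" by blast
            then show ?thesis using yV unfolding D_def nbhd_set_def nbhd_def by auto
          next
            case False
            then have yW: "y \<in> W c" using memW_o[OF yV cy] by simp
            then have "y \<in> V_odd (W c) adj" using Vodd cy by auto
            then have "y \<in> nbhd_set (W c) adj (Dd c)" using Ddm[of c] unfolding minimal_odd_TD_set_def odd_TD_set_def by auto
            then obtain z where z: "z \<in> Dd c" "y \<in> nbhd (W c) adj z" unfolding nbhd_set_def by auto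
            have "z \<in> D" using z DdD by auto
            moreover have "y \<in> nbhd V adj z" using z W_sub unfolding nbhd_def by auto
            ultimately show ?thesis unfolding nbhd_set_def by auto
          qed
        qed
      qed
    qed
    have DV: "D \<subseteq> V" using TD unfolding TD_set_def by auto
    obtain D0 where D0: "D0 \<subseteq> D" "minimal_TD_set V adj D0"
      using exists_min_TD[OF finite_subset[OF DV fin] TD] by blast
    have "F \<subseteq> V - D"
    proof
      fix v assume "v \<in> F"
      then have "v \<in> V_even (W Blue) adj - Dd Blue \<or> v \<in> V_even (W Red) adj - Dd Red"
        using F D1(2) D2(2) unfolding Dd_def by auto
      then obtain c where vc: "v \<in> V_even (W c) adj - Dd c" by blast
      then have vW: "v \<in> W c" and cv: "\<chi> v = c" using Veven by auto
      have vV: "v \<in> V" using vW W_sub by auto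
      have "v \<notin> H1" using memW_c[OF vV cv] vW by simp
      moreover have "v \<notin> Dd c" using vc by simp
      moreover have "v \<notin> Dd c'" if "c' \<noteq> c" for c' using Dde[of c'] cv that by auto
      ultimately have "v \<notin> H1" "v \<notin> Dd Blue" "v \<notin> Dd Red" by (cases c; auto)+
      then have "v \<notin> D" unfolding D_def Dd_def by simp
      then show "v \<in> V - D" using vV by simp
    qed
    then have "F \<subseteq> V - D0" using D0 by auto
    then show "F \<in> stable_complex V adj" unfolding stable_complex_def using D0 by blast
  qed
qed

end

theorem theorem4p9:
  fixes V :: "'a set" and adj :: "'a \<Rightarrow> 'a \<Rightarrow> bool" and \<chi> :: "'a \<Rightarrow> color"
  assumes "is_tree V adj"
    and "card V \<ge> 3"
    and "proper_2_coloring V adj \<chi>"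
  shows "stable_complex V adj =
           join_complex (even_stable_complex (interior_vertices V adj \<chi> Blue) adj)
                        (even_stable_complex (interior_vertices V adj \<chi> Red) adj)"
proof -
  interpret tctx V adj \<chi> using assms by unfold_locales
  show ?thesis by (rule main_eq)
qed

end
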